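(* Let $K$ be a field, $n\ge2$, regard $M_n(K)$ as a left $M_n(K)$-module via left multiplication, and for $X\in M_n(K)$ let $H_X=\{A\in M_n(K): \operatorname{Tr}(AX)=0\}$. Then for every $X\in M_n(K)$ and every choice of $\vartheta$: (i) if $\operatorname{char}K=0$ or $\operatorname{char}K=p>n$, then \[ \sigma_\vartheta(H_X)=\{Y\in M_n(K): YX=0\},\qquad \tau_\vartheta(H_X)=\{Y\in M_n(K): YX=0\ \text{or}\ YX=\lambda I_n\text{ for some }\lambda\in K\setminus\{0\}\}; \] (ii) if $\operatorname{char}K=p>0$ with $p\le n$, then $\sigma_\vartheta(H_X)=\tau_\vartheta(H_X)=\{Y\in M_n(K): YX=0\}$.
   Context: $I_n$ is the identity matrix and $\operatorname{Tr}$ the trace. For an associative unital algebra $\mathcal A$ over a field $K$, the symbol $\vartheta$ ranges over "left", "right", "pre-two-sided", "two-sided". A subspace $J\subseteq\mathcal A$ is a left (resp. right; two-sided) Mathieu subspace of $\mathcal A$ if whenever $a\in\mathcal A$ satisfies $a^m\in J$ for all $m\ge1$, then for all $b,c\in\mathcal A$ there is $N_0$ with $ba^m\in J$ (resp. $a^mc\in J$; $ba^mc\in J$) for all $m\ge N_0$; pre-two-sided means both left and right. A $\vartheta$-ideal means a left/right/two-sided ideal accordingly, and a two-sided ideal for $\vartheta$ = pre-two-sided. For a left $\mathcal A$-module $\mathcal M$, $u\in\mathcal M$, $N\subseteq \mathcal M$, $(N:u)=\{a\in\mathcal A: au\in N\}$; for a subspace $N$, $\sigma_\vartheta(N)=\{u\in\mathcal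 M: (N:u)\text{ is a }\vartheta\text{-ideal of }\mathcal A\}$, $\tau_\vartheta(N)=\{u\in\mathcal M: (N:u)\text{ is a }\vartheta\text{-Mathieu subspace of }\mathcal A\}$. *)

theory Defs
  imports "HOL-Analysis.Analysis"
begin

definition msmult :: "'a::field \<Rightarrow> 'a^'n^'n \<Rightarrow> 'a^'n^'n" where
  "msmult c A = (\<chi> i j. c * A$i$j)"

primrec matpow :: "'a::field^'n^'n \<Rightarrow> nat \<Rightarrow> 'a^'n^'n" where
  "matpow a 0 = mat 1"
| "matpow a (Suc m) = a ** matpow a m"

definition msubspace :: "('a::field^'n^'n) set \<Rightarrow> bool" where
  "msubspace J \<longleftrightarrow> 0 \<in> J \<and> (\<forall>x\<in>J. \<forall>y\<in>J. x + y \<in> J) \<and> (\<forall>c x. x \<in> J \<longrightarrow> msmult c x \<in> J)"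

datatype theta = Left | Right | PreTwoSided | TwoSided

definition left_ideal :: "('a::field^'n^'n) set \<Rightarrow> bool" where
  "left_ideal J \<longleftrightarrow> msubspace J \<and> (\<forall>b a. a \<in> J \<longrightarrow> b ** a \<in> J)"

definition right_ideal :: "('a::field^'n^'n) set \<Rightarrow> bool" where
  "right_ideal J \<longleftrightarrow> msubspace J \<and> (\<forall>a c. a \<in> J \<longrightarrow> a ** c \<in> J)"

definition twosided_ideal :: "('a::field^'n^'n) set \<Rightarrow> bool" where
  "twosided_ideal J \<longleftrightarrow> msubspace J \<and> (\<forall>b a c. a \<in> J \<longrightarrow> b ** a ** c \<in> J)"

fun theta_ideal :: "theta \<Rightarrow> ('a::field^'n^'n) set \<Rightarrow> bool" where
  "theta_ideal Left J = left_ideal J"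
| "theta_ideal Right J = right_ideal J"
| "theta_ideal PreTwoSided J = twosided_ideal J"
| "theta_ideal TwoSided J = twosided_ideal J"

definition left_mathieu :: "('a::field^'n^'n) set \<Rightarrow> bool" where
  "left_mathieu J \<longleftrightarrow> msubspace J \<and>
     (\<forall>a. (\<forall>m\<ge>1. matpow a m \<in> J) \<longrightarrow>
        (\<forall>b. \<exists>N0. \<forall>m\<ge>N0. b ** matpow a m \<in> J))"

definition right_mathieu :: "('a::field^'n^'n) set \<Rightarrow> bool" where
  "right_mathieu J \<longleftrightarrow> msubspace J \<and>
     (\<forall>a. (\<forall>m\<ge>1. matpow a m \<in> J) \<longrightarrow>
        (\<forall>c. \<exists>N0. \<forall>m\<ge>N0. matpow a m ** c \<in> J))"

definition twosided_mathieu :: "('a::field^'n^'n) set \<Rightarrow> bool" where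
  "twosided_mathieu J \<longleftrightarrow> msubspace J \<and>
     (\<forall>a. (\<forall>m\<ge>1. matpow a m \<in> J) \<longrightarrow>
        (\<forall>b c. \<exists>N0. \<forall>m\<ge>N0. b ** matpow a m ** c \<in> J))"

fun theta_mathieu :: "theta \<Rightarrow> ('a::field^'n^'n) set \<Rightarrow> bool" where
  "theta_mathieu Left J = left_mathieu J"
| "theta_mathieu Right J = right_mathieu J"
| "theta_mathieu PreTwoSided J = (left_mathieu J \<and> right_mathieu J)"
| "theta_mathieu TwoSided J = twosided_mathieu J"

text \<open>M_n(K) as left module over itself: (N:u) = {a. a u \<in> N}.\<close>
definition colon :: "('a::field^'n^'n) set \<Rightarrow> 'a^'n^'n \<Rightarrow> ('a^'n^'n) set" where
  "colon N u = {a. a ** u \<in> N}"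

definition sigma_theta :: "theta \<Rightarrow> ('a::field^'n^'n) set \<Rightarrow> ('a^'n^'n) set" where
  "sigma_theta th N = {u. theta_ideal th (colon N u)}"

definition tau_theta :: "theta \<Rightarrow> ('a::field^'n^'n) set \<Rightarrow> ('a^'n^'n) set" where
  "tau_theta th N = {u. theta_mathieu th (colon N u)}"

definition HX :: "'a::field^'n^'n \<Rightarrow> ('a^'n^'n) set" where
  "HX X = {A. trace (A ** X) = 0}"

end

theory Submission
  imports Defs
begin

lemma matpow_add: "matpow A (m + n) = matpow A m ** matpow A n"
  by (induction m) (simp_all add: matrix_mul_assoc)

lemma matpow_Suc_right: "matpow A (Suc m) = matpow A m ** A"
proof -
  have "matpow A (m + 1) = matpow A m ** matpow A 1" by (rule matpow_add)
  then show ?thesis by simp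
qed

lemma msmult_left: "msmult c A ** B = msmult c (A ** B)"
  by (simp add: msmult_def matrix_matrix_mult_def vec_eq_iff sum_distrib_left mult.assoc)

lemma msmult_right: "A ** msmult c B = msmult c (A ** B)"
  by (simp add: msmult_def matrix_matrix_mult_def vec_eq_iff sum_distrib_left algebra_simps)

lemma trace_msmult: "trace (msmult c A) = c * trace A"
  by (simp add: msmult_def trace_def sum_distrib_left)

lemma matrix_add_rdistrib': "(B + C) ** A = B ** A + C ** A"
  by (simp add: matrix_matrix_mult_def vec_eq_iff sum.distrib algebra_simps)

lemma msmult_add: "msmult c (A + B) = msmult c A + msmult c B"
  by (simp add: msmult_def vec_eq_iff algebra_simps)

lemma msmult_msmult: "msmult c (msmult d A) = msmult (c*d) A"
  by (simp add: msmult_def vec_eq_iff algebra_simps)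

lemma msmult_1: "msmult 1 A = A" by (simp add: msmult_def vec_eq_iff)
lemma msmult_0: "msmult 0 A = 0" by (simp add: msmult_def vec_eq_iff)

inductive_set alg :: "'a::field^'n^'n \<Rightarrow> ('a^'n^'n) set" for A where
  pw: "matpow A i \<in> alg A"
| ad: "M \<in> alg A \<Longrightarrow> N \<in> alg A \<Longrightarrow> M + N \<in> alg A"
| sm: "M \<in> alg A \<Longrightarrow> msmult c M \<in> alg A"

lemma alg_zero: "0 \<in> alg A"
proof -
  have "msmult 0 (matpow A 0) \<in> alg A" by (intro alg.sm alg.pw)
  then show ?thesis by (simp add: msmult_0)
qed

lemma alg_sum: "finite F \<Longrightarrow> (\<And>x. x \<in> F \<Longrightarrow> f x \<in> alg A) \<Longrightarrow> sum f F \<in> alg A"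
  by (induction F rule: finite_induct) (auto intro: alg_zero alg.ad)

lemma alg_pw_mult: "M \<in> alg A \<Longrightarrow> matpow A i ** M \<in> alg A"
proof (induction M rule: alg.induct)
  case (pw j) then show ?case by (metis alg.pw matpow_add)
next
  case (ad M N) then show ?case by (simp add: matrix_add_ldistrib alg.ad)
next
  case (sm M c) then show ?case by (simp add: msmult_right alg.sm)
qed

lemma alg_mult: "M \<in> alg A \<Longrightarrow> N \<in> alg A \<Longrightarrow> M ** N \<in> alg A"
proof (induction M rule: alg.induct)
  case (pw j) then show ?case by (simp add: alg_pw_mult)
next
  case (ad M N') then show ?case by (simp add: matrix_add_rdistrib' alg.ad)
next
  case (sm M c) then show ?case by (simp add: msmult_left alg.sm)
qed

lemma alg_pw_comm: "M \<in> alg A \<Longrightarrow> matpow A i ** M = M ** matpow A i"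
proof (induction M rule: alg.induct)
  case (pw j) then show ?case by (metis matpow_add add.commute)
next
  case (ad M N) then show ?case by (simp add: matrix_add_ldistrib matrix_add_rdistrib')
next
  case (sm M c) then show ?case by (simp add: msmult_left msmult_right)
qed

lemma alg_comm: "M \<in> alg A \<Longrightarrow> N \<in> alg A \<Longrightarrow> M ** N = N ** M"
proof (induction M rule: alg.induct)
  case (pw j) then show ?case by (simp add: alg_pw_comm)
next
  case (ad M N') then show ?case by (simp add: matrix_add_ldistrib matrix_add_rdistrib')
next
  case (sm M c) then show ?case by (simp add: msmult_left msmult_right)
qed

lemma alg_matpow: "M \<in> alg A \<Longrightarrow> matpow M m \<in> alg A"
  by (induction m) (auto intro: alg_mult alg.pw[of A 0, simplified])

lemma alg_A: "A \<in> alg A"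
  using alg.pw[of A 1] by simp

lemma matpow_mult_comm: "M ** N = N ** M \<Longrightarrow> matpow (M ** N) m = matpow M m ** matpow N m"
proof (induction m)
  case 0 then show ?case by simp
next
  case (Suc m)
  have c: "N ** matpow M m = matpow M m ** N"
  proof (induction m)
    case 0 then show ?case by simp
  next
    case (Suc k)
    have "N ** matpow M (Suc k) = (N ** M) ** matpow M k" by (simp add: matrix_mul_assoc)
    also have "\<dots> = M ** (N ** matpow M k)" using \<open>M ** N = N ** M\<close> by (simp add: matrix_mul_assoc)
    also have "\<dots> = matpow M (Suc k) ** N" using Suc.IH by (simp add: matrix_mul_assoc)
    finally show ?case .
  qed
  have "matpow (M ** N) (Suc m) = M ** (N ** matpow M m) ** matpow N m"
    using Suc by (simp add: matrix_mul_assoc)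
  also have "\<dots> = matpow M (Suc m) ** matpow N (Suc m)" using c by (simp add: matrix_mul_assoc)
  finally show ?case .
qed

lemma alg_trace:
  assumes tr: "\<forall>m\<ge>1. trace (matpow A m) = 0"
  shows "M \<in> alg A \<Longrightarrow> m \<ge> 1 \<Longrightarrow> trace (matpow A m ** M) = 0"
proof (induction M rule: alg.induct)
  case (pw j) then show ?case using tr by (metis matpow_add le_add1 order_trans)
next
  case (ad M N) then show ?case by (simp add: matrix_add_ldistrib trace_add)
next
  case (sm M c) then show ?case by (simp add: msmult_right trace_msmult)
qed

lemma mat_col: "(P *v axis j 1) $ i = P $ i $ j"
  by (simp add: matrix_vector_mult_def axis_def if_distrib cong: if_cong)

lemma idem_trace:
  fixes P :: "'a::field^'n^'n"
  assumes idem: "P ** P = P"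
  shows "\<exists>r. r \<le> CARD('n) \<and> trace P = of_nat r \<and> (r = 0 \<longrightarrow> P = 0)"
proof -
  define V where "V = {x::'a^'n. P *v x = x}"
  obtain B where BV: "B \<subseteq> V" and indB: "vec.independent B" and VB: "V \<subseteq> vec.span B"
    and cB: "card B = vec.dim V"
    using vec.basis_exists by blast
  have finB: "finite B" using indB vec.finiteI_independent by blast
  have cardB: "card B \<le> CARD('n)"
  proof -
    have "card B \<le> vec.dim (UNIV::('a^'n) set)"
      using vec.independent_card_le_dim[OF _ indB, of UNIV] by simp
    then show ?thesis by (simp only: vec_dim_card)
  qed
  have colV: "P *v axis j 1 \<in> V" for j
    unfolding V_def by (simp add: matrix_vector_mul_assoc idem)
  have "\<forall>j. \<exists>c. P *v axis j 1 = (\<Sum>b\<in>B. c b *s b)"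
  proof
    fix j
    have "P *v axis j 1 \<in> vec.span B" using colV VB by blast
    then show "\<exists>c. P *v axis j 1 = (\<Sum>b\<in>B. c b *s b)"
      using vec.span_finite[OF finB] by auto
  qed
  then obtain c where c: "\<And>j. P *v axis j 1 = (\<Sum>b\<in>B. c j b *s b)" by metis
  have Pent: "P $ i $ j = (\<Sum>b\<in>B. c j b * b $ i)" for i j
    using arg_cong[OF c[of j], of "\<lambda>x. x $ i"] by (simp add: mat_col sum_component)
  define d where "d b0 b = (\<Sum>j\<in>UNIV. b0 $ j * c j b)" for b0 b
  have dbb: "d b b = 1" if bB: "b \<in> B" for b
  proof -
    have "P *v b = b" using BV bB unfolding V_def by auto
    have exp: "P *v x = (\<Sum>j\<in>UNIV. x $ j *s (P *v axis j 1))" for x :: "'a^'n"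
      unfolding vec_eq_iff sum_component vector_smult_component mat_col
      by (simp add: matrix_vector_mult_def mult.commute)
    have "P *v b = (\<Sum>j\<in>UNIV. b $ j *s (\<Sum>b'\<in>B. c j b' *s b'))"
      using exp[of b] c by simp
    also have "\<dots> = (\<Sum>b'\<in>B. d b b' *s b')"
      by (simp add: d_def vec_eq_iff sum_component sum_distrib_left sum_distrib_right mult.assoc)
        (intro allI, rule sum.swap)
    finally have e1: "(\<Sum>b'\<in>B. d b b' *s b') = b" using \<open>P *v b = b\<close> by simp
    have S: "(\<Sum>b'\<in>B. (d b b' - (if b' = b then 1 else 0)) *s b') = 0"
    proof -
      have "(\<Sum>b'\<in>B. (d b b' - (if b' = b then 1 else 0)) *s b')
         = (\<Sum>b'\<in>B. d b b' *s b') - (\<Sum>b'\<in>B. (if b' = b then 1 else 0) *s b')"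
        by (simp add: vec_eq_iff sum_component algebra_simps sum_subtractf)
      also have "(\<Sum>b'\<in>B. (if b' = b then 1 else 0) *s b') = b"
      proof -
        have "(\<Sum>b'\<in>B. (if b' = b then 1 else 0) *s b') = (\<Sum>b'\<in>B. if b' = b then b' else 0)"
          by (rule sum.cong) auto
        then show ?thesis using finB bB by simp
      qed
      finally show ?thesis using e1 by simp
    qed
    moreover have H: "\<forall>c. (\<Sum>v\<in>B. c v *s v) = 0 \<longrightarrow> (\<forall>v\<in>B. c v = 0)"
      using indB unfolding vec.independent_explicit by blast
    have H2: "(\<Sum>v\<in>B. (d b v - (if v = b then 1 else 0)) *s v) = 0 \<longrightarrow>
        (\<forall>v\<in>B. d b v - (if v = b then 1 else 0) = 0)"
      using spec[OF H, of "\<lambda>v. d b v - (if v = b then 1 else 0)"] .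
    have "d b b - (if b = b then 1 else 0) = 0"
      using bspec[OF mp[OF H2 S] bB] .
    then show ?thesis by simp
  qed
  have "trace P = (\<Sum>i\<in>UNIV. \<Sum>b\<in>B. c i b * b $ i)"
    unfolding trace_def using Pent by simp
  also have "\<dots> = (\<Sum>b\<in>B. d b b)"
    by (subst sum.swap) (simp add: d_def mult.commute)
  also have "\<dots> = (\<Sum>b\<in>B. 1)" by (rule sum.cong) (simp_all add: dbb)
  also have "\<dots> = of_nat (card B)" by simp
  finally have tr: "trace P = of_nat (card B)" .
  have z: "card B = 0 \<longrightarrow> P = 0"
  proof
    assume "card B = 0"
    then have "B = {}" using finB by simp
    then have "V \<subseteq> {0}" using VB by simp
    then have "P *v axis j 1 = 0" for j using colV by blast
    then have "P $ i $ j = 0" for i j using mat_col[of P j i] by simp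
    then show "P = 0" by (simp add: vec_eq_iff)
  qed
  show ?thesis using tr z cardB by (intro exI[of _ "card B"]) simp
qed

definition fl :: "'a::field^'n^'n \<Rightarrow> 'a^('n \<times> 'n)" where
  "fl M = (\<chi> p. M $ fst p $ snd p)"

lemma fl_inj: assumes "fl M = fl N" shows "M = N"
proof -
  have "M $ i $ j = N $ i $ j" for i j
    using arg_cong[OF assms, of "\<lambda>v. v $ (i, j)"] by (simp add: fl_def)
  then show ?thesis by (simp add: vec_eq_iff)
qed

lemma fl_sum: "fl (sum f F) = (\<Sum>i\<in>F. fl (f i))"
  by (simp add: fl_def vec_eq_iff sum_component)

lemma fl_msmult: "fl (msmult c M) = c *s fl M"
  by (simp add: fl_def msmult_def vec_eq_iff)

lemma fl_zero: "fl M = 0 \<longleftrightarrow> M = 0"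
proof
  assume "fl M = 0"
  moreover have "fl (0::'a::field^'n^'n) = 0" by (simp add: fl_def vec_eq_iff)
  ultimately show "M = 0" using fl_inj by metis
qed (simp add: fl_def vec_eq_iff)

lemma matrix_mul_sum_right: "M ** sum f F = (\<Sum>i\<in>F. M ** f i)"
  by (induction F rule: infinite_finite_induct) (simp_all add: matrix_add_ldistrib)

lemma msmult_neg: "msmult c (- X) = msmult (- c) X"
  by (simp add: msmult_def vec_eq_iff)

lemma pow_shift: "k < i \<Longrightarrow> matpow A i = matpow A k ** (A ** matpow A (i - k - 1))"
proof -
  assume "k < i"
  then have "i = k + Suc (i - k - 1)" by simp
  then have "matpow A i = matpow A k ** matpow A (Suc (i - k - 1))" by (metis matpow_add)
  then show ?thesis by simp
qed

lemma pow_rel: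
  fixes A :: "'a::field^'n^'n"
  shows "\<exists>k R. R \<in> alg A \<and> matpow A k = matpow A k ** (A ** R)"
proof (cases "inj_on (matpow A) {..CARD('n \<times> 'n)}")
  case False
  then obtain i j where ij: "i \<noteq> j" "matpow A i = matpow A j"
    unfolding inj_on_def by blast
  show ?thesis
  proof (cases "i < j")
    case True
    have "matpow A i = matpow A i ** (A ** matpow A (j - i - 1))"
      using ij pow_shift[OF True, of A] by simp
    then show ?thesis by (blast intro: alg.pw)
  next
    case False
    then have "j < i" using ij by simp
    have "matpow A j = matpow A j ** (A ** matpow A (i - j - 1))"
      using ij pow_shift[OF \<open>j < i\<close>, of A] by simp
    then show ?thesis by (blast intro: alg.pw)
  qed
next
  case True
  define N where "N = CARD('n \<times> 'n)"
  define S where "S = (fl \<circ> matpow A) ` {..N}"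
  have injS: "inj_on (fl \<circ> matpow A) {..N}"
    using True unfolding N_def inj_on_def by (auto dest: fl_inj)
  have cS: "card S = Suc N" unfolding S_def using card_image[OF injS] by simp
  have "vec.dim S \<le> N" unfolding N_def by (rule dim_subset_UNIV_cart_gen)
  then have "vec.dependent S" using cS by (intro vec.dependent_biggerset_general) simp
  then obtain T u where T: "finite T" "T \<subseteq> S" "(\<Sum>v\<in>T. u v *s v) = 0" "\<exists>v\<in>T. u v \<noteq> 0"
    unfolding vec.dependent_explicit by blast
  define I where "I = {i \<in> {..N}. fl (matpow A i) \<in> T}"
  have TI: "T = (fl \<circ> matpow A) ` I" using T(2) unfolding I_def S_def by auto
  have injI: "inj_on (fl \<circ> matpow A) I" using injS unfolding I_def by (rule inj_on_subset) auto
  have finI: "finite I" unfolding I_def by simp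
  define a where "a i = u (fl (matpow A i))" for i
  have "(\<Sum>i\<in>I. a i *s fl (matpow A i)) = 0"
    using T(3) unfolding TI sum.reindex[OF injI] by (simp add: a_def)
  then have "fl (\<Sum>i\<in>I. msmult (a i) (matpow A i)) = 0"
    by (simp add: fl_sum fl_msmult)
  then have s0: "(\<Sum>i\<in>I. msmult (a i) (matpow A i)) = 0" by (simp add: fl_zero)
  define I' where "I' = {i\<in>I. a i \<noteq> 0}"
  have finI': "finite I'" using finI unfolding I'_def by simp
  have neI': "I' \<noteq> {}" using T(4) unfolding TI I'_def a_def by auto
  have "(\<Sum>i\<in>I'. msmult (a i) (matpow A i)) = (\<Sum>i\<in>I. msmult (a i) (matpow A i))"
    by (rule sum.mono_neutral_left) (auto simp: finI I'_def msmult_0)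
  then have s1: "(\<Sum>i\<in>I'. msmult (a i) (matpow A i)) = 0" using s0 by simp
  define k where "k = Min I'"
  have kI: "k \<in> I'" unfolding k_def using finI' neI' by simp
  have ak: "a k \<noteq> 0" using kI unfolding I'_def by simp
  have gt: "i \<in> I' - {k} \<Longrightarrow> k < i" for i
    using Min_le[OF finI'] unfolding k_def by (metis DiffE insertI1 le_neq_implies_less)
  define Rs where "Rs = (\<Sum>i\<in>I'-{k}. msmult (a i) (matpow A (i - k - 1)))"
  have RsA: "Rs \<in> alg A" unfolding Rs_def
    by (intro alg_sum) (auto intro: alg.sm alg.pw simp: finI')
  have "(\<Sum>i\<in>I'-{k}. msmult (a i) (matpow A i)) = (\<Sum>i\<in>I'-{k}. matpow A k ** (A ** msmult (a i) (matpow A (i - k - 1))))"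
  proof (rule sum.cong)
    fix i assume "i \<in> I' - {k}"
    then have "k < i" by (rule gt)
    then show "msmult (a i) (matpow A i) = matpow A k ** (A ** msmult (a i) (matpow A (i - k - 1)))"
      using pow_shift[OF \<open>k < i\<close>, of A] by (simp add: msmult_right)
  qed simp
  also have "\<dots> = matpow A k ** (A ** Rs)"
    unfolding Rs_def by (simp add: matrix_mul_sum_right)
  finally have s2: "(\<Sum>i\<in>I'-{k}. msmult (a i) (matpow A i)) = matpow A k ** (A ** Rs)" .
  have "(\<Sum>i\<in>I'. msmult (a i) (matpow A i)) = msmult (a k) (matpow A k) + (\<Sum>i\<in>I'-{k}. msmult (a i) (matpow A i))"
    using finI' kI by (simp add: sum.remove)
  then have "msmult (a k) (matpow A k) = - (matpow A k ** (A ** Rs))"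
    using s1 s2 by (simp add: eq_neg_iff_add_eq_0)
  then have "msmult (1 / a k) (msmult (a k) (matpow A k)) = msmult (1 / a k) (- (matpow A k ** (A ** Rs)))"
    by simp
  then have "matpow A k = matpow A k ** (A ** msmult (- (1 / a k)) Rs)"
    using ak by (simp add: msmult_msmult msmult_1 msmult_neg msmult_right)
  moreover have "msmult (- (1 / a k)) Rs \<in> alg A" using RsA by (rule alg.sm)
  ultimately show ?thesis by blast
qed

lemma nilp:
  fixes A :: "'a::field^'n^'n"
  assumes tr: "\<forall>m\<ge>1. trace (matpow A m) = 0"
    and ch: "CHAR('a) = 0 \<or> CHAR('a) > CARD('n)"
  shows "\<exists>K. \<forall>m\<ge>K. matpow A m = 0"
proof -
  obtain k0 R where R: "R \<in> alg A" and kR: "matpow A k0 = matpow A k0 ** (A ** R)"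
    using pow_rel by blast
  define k where "k = Suc k0"
  define T where "T = A ** R"
  have TA: "T \<in> alg A" unfolding T_def by (intro alg_mult alg_A R)
  have kT: "matpow A k = matpow A k ** T"
    unfolding k_def T_def using kR by (simp add: matrix_mul_assoc[symmetric])
  have kTj: "matpow A k = matpow A k ** matpow T j" for j
  proof (induction j)
    case 0 then show ?case by simp
  next
    case (Suc j)
    have "matpow A k ** matpow T (Suc j) = (matpow A k ** T) ** matpow T j"
      by (simp add: matrix_mul_assoc)
    then show ?case using Suc kT by simp
  qed
  define P where "P = matpow T k"
  have PA: "P \<in> alg A" unfolding P_def by (rule alg_matpow[OF TA])
  have Pdec: "P = matpow A k ** matpow R k"
    unfolding P_def T_def by (rule matpow_mult_comm) (rule alg_comm[OF alg_A R])
  have idem: "P ** P = P"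
  proof -
    have "P ** P = P ** (matpow A k ** matpow R k)" using Pdec by simp
    also have "\<dots> = (P ** matpow A k) ** matpow R k" by (simp add: matrix_mul_assoc)
    also have "P ** matpow A k = matpow A k ** P" by (rule alg_comm[OF PA alg.pw])
    also have "matpow A k ** P = matpow A k" unfolding P_def using kTj by simp
    finally show ?thesis using Pdec by simp
  qed
  have trP: "trace P = 0"
  proof -
    have "P = matpow A 1 ** (R ** matpow T k0)"
      unfolding P_def k_def T_def by (simp add: matrix_mul_assoc)
    moreover have "R ** matpow T k0 \<in> alg A" by (intro alg_mult R alg_matpow TA)
    ultimately show ?thesis using alg_trace[OF tr, of "R ** matpow T k0" 1] by simp
  qed
  obtain r where r: "r \<le> CARD('n)" "trace P = of_nat r" "r = 0 \<longrightarrow> P = 0"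
    using idem_trace[OF idem] by blast
  have "of_nat r = (0::'a)" using r trP by simp
  then have "CHAR('a) dvd r" by (simp add: of_nat_eq_0_iff_char_dvd)
  then have "r = 0" using ch r(1) by (auto dest: dvd_imp_le)
  then have "P = 0" using r by simp
  then have Ak: "matpow A k = 0" using kTj[of k] unfolding P_def by simp
  show ?thesis
  proof (intro exI allI impI)
    fix m assume "k \<le> m"
    then have "matpow A m = matpow A (m - k) ** matpow A k" by (metis matpow_add le_add_diff_inverse2)
    then show "matpow A m = 0" using Ak by simp
  qed
qed

definition JZ :: "'a::field^'n^'n \<Rightarrow> ('a^'n^'n) set" where
  "JZ Z = {A. trace (A ** Z) = 0}"

definition outer :: "'a::field^'n \<Rightarrow> 'a^'n \<Rightarrow> 'a^'n^'n" where
  "outer u v = (\<chi> i j. u $ i * v $ j)"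

definition EE :: "'n \<Rightarrow> 'n \<Rightarrow> 'a::field^'n^'n" where
  "EE k l = (\<chi> i j. if i = k \<and> j = l then 1 else 0)"

definition QQ :: "'a::field^'n \<Rightarrow> 'a^'n \<Rightarrow> 'a^'n^'n \<Rightarrow> 'a" where
  "QQ u v Z = (\<Sum>a\<in>UNIV. \<Sum>b\<in>UNIV. v $ a * Z $ a $ b * u $ b)"

lemma trace_zero: "trace (0::'a::field^'n^'n) = 0" by (simp add: trace_def)

lemma ifz_mult: "(if P then a else 0) * (b::'a::field) = (if P then a * b else 0)" by simp
lemma mult_ifz: "(b::'a::field) * (if P then a else 0) = (if P then b * a else 0)" by simp

lemma sum_ifP: "(\<Sum>x\<in>A. if P then f x else (0::'a::field)) = (if P then sum f A else 0)" by simp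

lemma colon_eq: "colon (HX X) Y = JZ (Y ** X)"
  by (simp add: colon_def HX_def JZ_def matrix_mul_assoc)

lemma msub_JZ: "msubspace (JZ Z)"
  unfolding msubspace_def JZ_def
  by (simp add: matrix_add_rdistrib' trace_add msmult_left trace_msmult trace_zero)

lemma JZ_0: "JZ 0 = UNIV"
  by (simp add: JZ_def trace_def)

lemma mul_mat: "A ** mat c = msmult c A"
  by (simp add: matrix_matrix_mult_def mat_def msmult_def vec_eq_iff ifz_mult mult_ifz mult.commute
      cong: if_cong)

lemma JZ_mat: "(c::'a::field) \<noteq> 0 \<Longrightarrow> JZ (mat c) = {A. trace A = 0}"
  by (simp add: JZ_def mul_mat trace_msmult)

lemma msub_UNIV: "msubspace UNIV" by (simp add: msubspace_def)

lemma tr_outer: "trace (outer u v ** Z) = QQ u v Z"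
  unfolding trace_def matrix_matrix_mult_def outer_def QQ_def
  by (simp add: sum_distrib_left mult_ac) (rule sum.swap)

lemma E_outer: "EE k l ** outer u v = (\<chi> i j. if i = k then u $ l * v $ j else 0)"
  by (simp add: EE_def outer_def matrix_matrix_mult_def vec_eq_iff ifz_mult mult_ifz cong: if_cong)

lemma outer_E: "outer u v ** EE k l = (\<chi> i j. if j = l then u $ i * v $ k else 0)"
  by (simp add: EE_def outer_def matrix_matrix_mult_def vec_eq_iff ifz_mult mult_ifz cong: if_cong)

lemma tr_E_outer: "trace (EE k l ** outer u v ** Z) = u $ l * (\<Sum>a\<in>UNIV. v $ a * Z $ a $ k)"
  unfolding E_outer
  by (simp add: sum_ifP trace_def matrix_matrix_mult_def ifz_mult mult_ifz sum_distrib_left mult_ac cong: if_cong)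

lemma tr_outer_E: "trace (outer u v ** EE k l ** Z) = v $ k * (\<Sum>b\<in>UNIV. Z $ l $ b * u $ b)"
  unfolding outer_E
  by (simp add: trace_def matrix_matrix_mult_def ifz_mult mult_ifz sum_distrib_left mult_ac cong: if_cong)

lemma outer_idem: "(\<Sum>k\<in>UNIV. v $ k * u $ k) = 1 \<Longrightarrow> outer u v ** outer u v = outer u v"
proof -
  assume d: "(\<Sum>k\<in>UNIV. v $ k * u $ k) = 1"
  have "(\<Sum>k\<in>UNIV. u $ i * v $ k * (u $ k * v $ j)) = u $ i * v $ j" for i j
  proof -
    have "(\<Sum>k\<in>UNIV. u $ i * v $ k * (u $ k * v $ j)) = u $ i * v $ j * (\<Sum>k\<in>UNIV. v $ k * u $ k)"
      by (simp add: sum_distrib_left mult_ac)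
    then show ?thesis using d by simp
  qed
  then show ?thesis by (simp add: outer_def matrix_matrix_mult_def vec_eq_iff)
qed

lemma matpow_idem: "M ** M = M \<Longrightarrow> m \<ge> 1 \<Longrightarrow> matpow M m = M"
proof (induction m)
  case 0 then show ?case by simp
next
  case (Suc m) then show ?case by (cases m) auto
qed

lemma left_m_fail_gen:
  assumes "a ** a = a" "a \<in> J" "b ** a \<notin> J"
  shows "\<not> left_mathieu J"
proof
  assume "left_mathieu J"
  moreover have "\<forall>m\<ge>1. matpow a m \<in> J" using assms(2) matpow_idem[OF assms(1)] by simp
  ultimately obtain N0 where "\<forall>m\<ge>N0. b ** matpow a m \<in> J"
    unfolding left_mathieu_def by blast
  then have "b ** matpow a (Suc N0) \<in> J" by (simp del: matpow.simps)
  then show False using assms matpow_idem[of a "Suc N0"] by simp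
qed

lemma right_m_fail_gen:
  assumes "a ** a = a" "a \<in> J" "a ** c \<notin> J"
  shows "\<not> right_mathieu J"
proof
  assume "right_mathieu J"
  moreover have "\<forall>m\<ge>1. matpow a m \<in> J" using assms(2) matpow_idem[OF assms(1)] by simp
  ultimately obtain N0 where "\<forall>m\<ge>N0. matpow a m ** c \<in> J"
    unfolding right_mathieu_def by blast
  then have "matpow a (Suc N0) ** c \<in> J" by (simp del: matpow.simps)
  then show False using assms matpow_idem[of a "Suc N0"] by simp
qed

lemma two_left_m: "twosided_mathieu J \<Longrightarrow> left_mathieu J"
  unfolding twosided_mathieu_def left_mathieu_def
  by (metis matrix_mul_rid)

lemma two_left_i: "twosided_ideal J \<Longrightarrow> left_ideal J"
  unfolding twosided_ideal_def left_ideal_def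
  by (metis matrix_mul_rid)

lemma left_i_fail:
  assumes "QQ u v Z = 0" "(\<Sum>a\<in>UNIV. v $ a * Z $ a $ k) \<noteq> 0" "u $ l \<noteq> 0"
  shows "\<not> left_ideal (JZ Z)"
proof
  assume "left_ideal (JZ Z)"
  moreover have "outer u v \<in> JZ Z" using assms by (simp add: JZ_def tr_outer)
  ultimately have "EE k l ** outer u v \<in> JZ Z" unfolding left_ideal_def by blast
  then show False using assms by (simp add: JZ_def tr_E_outer)
qed

lemma right_i_fail:
  assumes "QQ u v Z = 0" "v $ k \<noteq> 0" "(\<Sum>b\<in>UNIV. Z $ l $ b * u $ b) \<noteq> 0"
  shows "\<not> right_ideal (JZ Z)"
proof
  assume "right_ideal (JZ Z)"
  moreover have "outer u v \<in> JZ Z" using assms by (simp add: JZ_def tr_outer)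
  ultimately have "outer u v ** EE k l \<in> JZ Z" unfolding right_ideal_def by blast
  then show False using assms by (simp add: JZ_def tr_outer_E)
qed

lemma left_m_fail:
  assumes "(\<Sum>k\<in>UNIV. v $ k * u $ k) = 1" "QQ u v Z = 0" "(\<Sum>a\<in>UNIV. v $ a * Z $ a $ k) \<noteq> 0" "u $ l \<noteq> 0"
  shows "\<not> left_mathieu (JZ Z)"
  by (rule left_m_fail_gen[of "outer u v" _ "EE k l"])
     (use assms outer_idem in \<open>simp_all add: JZ_def tr_outer tr_E_outer\<close>)

lemma right_m_fail:
  assumes "(\<Sum>k\<in>UNIV. v $ k * u $ k) = 1" "QQ u v Z = 0" "v $ k \<noteq> 0" "(\<Sum>b\<in>UNIV. Z $ l $ b * u $ b) \<noteq> 0"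
  shows "\<not> right_mathieu (JZ Z)"
  by (rule right_m_fail_gen[of "outer u v" _ "EE k l"])
     (use assms outer_idem in \<open>simp_all add: JZ_def tr_outer tr_outer_E\<close>)

lemma sum_pt: "(\<Sum>b\<in>UNIV. (f::'n::finite \<Rightarrow> 'a) b * (if b = i then x else 0)) = f i * (x::'a::field)"
  by (simp add: mult_ifz sum.delta)
lemma sum_pt': "(\<Sum>b\<in>UNIV. (if b = i then x else 0) * (f::'n::finite \<Rightarrow> 'a) b) = x * (f i::'a::field)"
  by (simp add: ifz_mult sum.delta)
lemma sum_pt2: "i \<noteq> j \<Longrightarrow> (\<Sum>b\<in>UNIV. (f::'n::finite \<Rightarrow> 'a) b * (if b = i then x else if b = j then y else 0)) = f i * x + f j * (y::'a::field)"
proof -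
  assume ij: "i \<noteq> j"
  have "(\<Sum>b\<in>UNIV. f b * (if b = i then x else if b = j then y else 0))
      = (\<Sum>b\<in>UNIV. f b * (if b = i then x else 0) + f b * (if b = j then y else 0))"
    by (rule sum.cong) (auto simp: ij)
  then show ?thesis by (simp add: sum.distrib sum_pt)
qed
lemma sum_pt2': "i \<noteq> j \<Longrightarrow> (\<Sum>b\<in>UNIV. (if b = i then x else if b = j then y else 0) * (f::'n::finite \<Rightarrow> 'a) b) = x * f i + y * (f j::'a::field)"
  using sum_pt2[of i j f x y] by (simp add: mult.commute)

lemma QQ_v_pt: "QQ u (\<chi> a. if a = i then 1 else 0) Z = (\<Sum>b\<in>UNIV. Z $ i $ b * u $ b)"
  unfolding QQ_def by (simp add: ifz_mult sum_ifP sum.delta)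

lemma QQ_u_pt: "QQ (\<chi> b. if b = j then 1 else 0) v Z = (\<Sum>a\<in>UNIV. v $ a * Z $ a $ j)"
  unfolding QQ_def by (simp add: mult_ifz sum.delta)

lemma ideal_fail_nz:
  fixes Z :: "'a::field^'n^'n"
  assumes n2: "CARD('n) \<ge> 2" and nz: "Z \<noteq> 0"
  shows "\<not> left_ideal (JZ Z) \<and> \<not> right_ideal (JZ Z)"
proof -
  obtain i j where zij: "Z $ i $ j \<noteq> 0" using nz by (metis vec_eq_iff zero_index)
  have ex2: "\<exists>m. m \<noteq> (x::'n)" for x
  proof (rule ccontr)
    assume "\<not> (\<exists>m. m \<noteq> x)"
    then have "UNIV = {x}" by auto
    then show False using n2 by (metis card.empty card.insert empty_iff finite.emptyI numeral_le_one_iff semiring_norm(69) One_nat_def)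
  qed
  obtain m where mj: "m \<noteq> j" using ex2 by blast
  obtain m' where mi: "m' \<noteq> i" using ex2 by blast
  define v :: "'a^'n" where "v = (\<chi> a. if a = i then 1 else 0)"
  define u :: "'a^'n" where "u = (\<chi> b. if b = m then Z $ i $ j else if b = j then - Z $ i $ m else 0)"
  have "QQ u v Z = 0"
    unfolding v_def QQ_v_pt unfolding u_def using mj by (simp add: sum_pt2 mult.commute)
  moreover have "(\<Sum>a\<in>UNIV. v $ a * Z $ a $ j) \<noteq> 0" unfolding v_def using zij by (simp add: ifz_mult)
  moreover have "u $ m \<noteq> 0" unfolding u_def using zij by simp
  ultimately have L: "\<not> left_ideal (JZ Z)" by (rule left_i_fail)
  define u2 :: "'a^'n" where "u2 = (\<chi> b. if b = j then 1 else 0)"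
  define v2 :: "'a^'n" where "v2 = (\<chi> a. if a = m' then Z $ i $ j else if a = i then - Z $ m' $ j else 0)"
  have "QQ u2 v2 Z = 0"
    unfolding u2_def QQ_u_pt unfolding v2_def using mi by (simp add: sum_pt2 sum_pt2' mult.commute)
  moreover have "v2 $ m' \<noteq> 0" unfolding v2_def using zij by simp
  moreover have "(\<Sum>b\<in>UNIV. Z $ i $ b * u2 $ b) \<noteq> 0" unfolding u2_def using zij by (simp add: mult_ifz)
  ultimately have R: "\<not> right_ideal (JZ Z)" by (rule right_i_fail)
  show ?thesis using L R by blast
qed

lemma diag_sum:
  assumes "\<forall>a b. a \<noteq> b \<longrightarrow> Z $ a $ b = (0::'a::field)"
  shows "(\<Sum>b\<in>UNIV. Z $ a $ b * u $ b) = Z $ a $ a * u $ a"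
proof -
  have "(\<Sum>b\<in>UNIV. Z $ a $ b * u $ b) = (\<Sum>b\<in>UNIV. if b = a then Z $ a $ a * u $ a else 0)"
    by (rule sum.cong) (use assms in auto)
  then show ?thesis by (simp add: sum.delta)
qed

lemma QQ_alt: "QQ u v Z = (\<Sum>a\<in>UNIV. v $ a * (\<Sum>b\<in>UNIV. Z $ a $ b * u $ b))"
  unfolding QQ_def by (simp add: sum_distrib_left mult.assoc)

lemma nonscalar_left:
  fixes Z :: "'a::field^'n^'n"
  assumes ns: "\<forall>c. Z \<noteq> mat c"
  shows "\<exists>u v k l. (\<Sum>k\<in>UNIV. v $ k * u $ k) = 1 \<and> QQ u v Z = 0 \<and>
           (\<Sum>a\<in>UNIV. v $ a * Z $ a $ k) \<noteq> 0 \<and> u $ l \<noteq> 0"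
proof (cases "\<exists>i j. i \<noteq> j \<and> Z $ i $ j \<noteq> 0")
  case True
  then obtain i j where ij: "i \<noteq> j" "Z $ i $ j \<noteq> 0" by blast
  define c where "c = - Z $ i $ i / Z $ i $ j"
  define v :: "'a^'n" where "v = (\<chi> a. if a = i then 1 else 0)"
  define u :: "'a^'n" where "u = (\<chi> b. if b = i then 1 else if b = j then c else 0)"
  have "(\<Sum>k\<in>UNIV. v $ k * u $ k) = 1" unfolding v_def u_def by (simp add: ifz_mult sum.delta)
  moreover have "QQ u v Z = 0"
    unfolding v_def QQ_v_pt unfolding u_def using ij by (simp add: sum_pt2 c_def)
  moreover have "(\<Sum>a\<in>UNIV. v $ a * Z $ a $ j) \<noteq> 0" unfolding v_def using ij by (simp add: ifz_mult sum.delta)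
  moreover have "u $ i \<noteq> 0" unfolding u_def by simp
  ultimately show ?thesis by blast
next
  case False
  then have diag: "\<forall>a b. a \<noteq> b \<longrightarrow> Z $ a $ b = 0" by auto
  have "\<exists>i j. Z $ i $ i \<noteq> Z $ j $ j"
  proof (rule ccontr)
    assume na: "\<not> (\<exists>i j. Z $ i $ i \<noteq> Z $ j $ j)"
    have eq: "Z $ a $ a = Z $ undefined $ undefined" for a
    proof (rule ccontr)
      assume ne: "Z $ a $ a \<noteq> Z $ undefined $ undefined"
      have "\<exists>i j. Z $ i $ i \<noteq> Z $ j $ j" by (rule exI[of _ a], rule exI[of _ undefined], rule ne)
      then show False using na by (rule notE[rotated])
    qed
    define c0 where "c0 = Z $ undefined $ undefined"
    have "Z $ a $ b = mat c0 $ a $ b" for a b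
      using diag eq[of a] unfolding c0_def[symmetric] by (cases "a = b") (simp_all add: mat_def)
    then have "Z = mat c0" by (simp add: vec_eq_iff)
    then show False using ns by blast
  qed
  then obtain i j where dij: "Z $ i $ i \<noteq> Z $ j $ j" by blast
  then have ij: "i \<noteq> j" by auto
  define d where "d = Z $ j $ j - Z $ i $ i"
  have d0: "d \<noteq> 0" using dij unfolding d_def by simp
  define \<alpha> where "\<alpha> = Z $ j $ j / d"
  define \<beta> where "\<beta> = - Z $ i $ i / d"
  define v :: "'a^'n" where "v = (\<chi> a. if a = i then 1 else if a = j then 1 else 0)"
  define u :: "'a^'n" where "u = (\<chi> b. if b = i then \<alpha> else if b = j then \<beta> else 0)"
  have "(\<Sum>k\<in>UNIV. v $ k * u $ k) = \<alpha> + \<beta>"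
    unfolding v_def using ij sum_pt2'[OF ij, of 1 1 "\<lambda>k. u $ k"] by (simp add: u_def)
  also have "\<dots> = (Z $ j $ j - Z $ i $ i) / d" unfolding \<alpha>_def \<beta>_def by (simp add: diff_divide_distrib)
  also have "\<dots> = 1" using d0 unfolding d_def[symmetric] by simp
  finally have dot: "(\<Sum>k\<in>UNIV. v $ k * u $ k) = 1" .
  have "QQ u v Z = (\<Sum>a\<in>UNIV. v $ a * (Z $ a $ a * u $ a))"
    unfolding QQ_alt diag_sum[OF diag] ..
  also have "\<dots> = Z $ i $ i * \<alpha> + Z $ j $ j * \<beta>"
    unfolding v_def using sum_pt2'[OF ij, of 1 1 "\<lambda>a. Z $ a $ a * u $ a"] ij by (simp add: u_def)
  also have "\<dots> = 0" using d0 unfolding \<alpha>_def \<beta>_def by (simp add: field_simps)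
  finally have q: "QQ u v Z = 0" .
  have colk: "(\<Sum>a\<in>UNIV. v $ a * Z $ a $ k) = (if k = i \<or> k = j then Z $ k $ k else 0)" for k
  proof -
    have "(\<Sum>a\<in>UNIV. v $ a * Z $ a $ k) = Z $ i $ k + Z $ j $ k"
      unfolding v_def using sum_pt2'[OF ij, of 1 1 "\<lambda>a. Z $ a $ k"] by simp
    then show ?thesis using diag ij by auto
  qed
  obtain k where k: "(\<Sum>a\<in>UNIV. v $ a * Z $ a $ k) \<noteq> 0"
  proof (cases "Z $ i $ i = 0")
    case True
    then have "Z $ j $ j \<noteq> 0" using dij by simp
    then show ?thesis using that[of j] colk[of j] by simp
  next
    case False
    then show ?thesis using that[of i] colk[of i] by simp
  qed
  obtain l where l: "u $ l \<noteq> 0"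
  proof (cases "Z $ j $ j = 0")
    case True
    then have "Z $ i $ i \<noteq> 0" using dij by simp
    then have "u $ j \<noteq> 0" unfolding u_def \<beta>_def using ij d0 by simp
    then show ?thesis using that by blast
  next
    case False
    then have "u $ i \<noteq> 0" unfolding u_def \<alpha>_def using ij d0 by simp
    then show ?thesis using that by blast
  qed
  show ?thesis
    by (rule exI[of _ u], rule exI[of _ v], rule exI[of _ k], rule exI[of _ l]) (simp add: dot q k l)
qed

lemma nonscalar_right:
  fixes Z :: "'a::field^'n^'n"
  assumes ns: "\<forall>c. Z \<noteq> mat c"
  shows "\<exists>u v k l. (\<Sum>k\<in>UNIV. v $ k * u $ k) = 1 \<and> QQ u v Z = 0 \<and>
           v $ k \<noteq> 0 \<and> (\<Sum>b\<in>UNIV. Z $ l $ b * u $ b) \<noteq> 0"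
proof -
  have "\<forall>c. transpose Z \<noteq> mat c"
    using ns by (metis transpose_mat transpose_transpose)
  then obtain u v k l where h: "(\<Sum>k\<in>UNIV. v $ k * u $ k) = 1" "QQ u v (transpose Z) = 0"
    "(\<Sum>a\<in>UNIV. v $ a * transpose Z $ a $ k) \<noteq> 0" "u $ l \<noteq> 0"
    using nonscalar_left by blast
  have "(\<Sum>i\<in>UNIV. u $ i * v $ i) = 1" using h(1) by (simp add: mult.commute)
  moreover have "QQ v u Z = 0"
  proof -
    have "QQ v u Z = QQ u v (transpose Z)"
      unfolding QQ_def transpose_def by (subst sum.swap) (simp add: mult_ac)
    then show ?thesis using h(2) by simp
  qed
  moreover have "(\<Sum>b\<in>UNIV. Z $ k $ b * v $ b) \<noteq> 0"
    using h(3) by (simp add: transpose_def mult.commute)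
  ultimately show ?thesis using h(4)
    by (intro exI[of _ v] exI[of _ u] exI[of _ l] exI[of _ k]) simp
qed

lemma nonscalar_fail:
  fixes Z :: "'a::field^'n^'n"
  assumes ns: "\<forall>c. Z \<noteq> mat c"
  shows "\<not> left_mathieu (JZ Z) \<and> \<not> right_mathieu (JZ Z)"
proof
  obtain u v k l where "(\<Sum>k\<in>UNIV. v $ k * u $ k) = 1" "QQ u v Z = 0"
           "(\<Sum>a\<in>UNIV. v $ a * Z $ a $ k) \<noteq> 0" "u $ l \<noteq> 0"
    using nonscalar_left[OF ns] by blast
  then show "\<not> left_mathieu (JZ Z)" by (rule left_m_fail)
  obtain u v k l where "(\<Sum>k\<in>UNIV. v $ k * u $ k) = 1" "QQ u v Z = 0"
           "v $ k \<noteq> 0" "(\<Sum>b\<in>UNIV. Z $ l $ b * u $ b) \<noteq> 0"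
    using nonscalar_right[OF ns] by blast
  then show "\<not> right_mathieu (JZ Z)" by (rule right_m_fail)
qed

lemma Dmul: "(\<chi> i j. if i = j \<and> i \<in> S then 1 else 0) ** M = (\<chi> i j. if i \<in> S then M $ i $ j else (0::'a::field))"
  by (simp add: matrix_matrix_mult_def vec_eq_iff ifz_mult sum.delta)

lemma Emul: "EE k l ** M = (\<chi> i j. if i = k then M $ l $ j else (0::'a::field))"
  by (simp add: EE_def matrix_matrix_mult_def vec_eq_iff ifz_mult sum_ifP sum.delta)

lemma charp_fail:
  assumes p0: "0 < CHAR('a)" and pn: "CHAR('a) \<le> CARD('n)" and c0: "(c::'a::field) \<noteq> 0"
  shows "\<not> left_mathieu (JZ (mat c :: 'a^'n^'n)) \<and> \<not> right_mathieu (JZ (mat c :: 'a^'n^'n))"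
proof -
  obtain S :: "'n set" where S: "card S = CHAR('a)" "finite S"
    using obtain_subset_with_card_n[of "CHAR('a)" "UNIV :: 'n set"] pn by auto
  then obtain s where sS: "s \<in> S" using p0 by fastforce
  define D :: "'a^'n^'n" where "D = (\<chi> i j. if i = j \<and> i \<in> S then 1 else 0)"
  have DD: "D ** D = D"
    unfolding D_def Dmul by (simp add: vec_eq_iff)
  have "trace D = (\<Sum>i\<in>UNIV. if i \<in> S then 1 else 0)" by (simp add: trace_def D_def)
  also have "\<dots> = of_nat (card S)" by (simp add: sum.If_cases)
  also have "\<dots> = 0" using S by simp
  finally have trD: "trace D = 0" .
  have J: "JZ (mat c :: 'a^'n^'n) = {A. trace A = 0}" by (rule JZ_mat[OF c0])
  have ED: "EE s s ** D = EE s s"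
    using sS unfolding Emul by (simp add: vec_eq_iff D_def EE_def)
  have DE: "D ** EE s s = EE s s"
    using sS unfolding D_def Dmul by (simp add: vec_eq_iff EE_def)
  have trE: "trace (EE s s :: 'a^'n^'n) = 1" by (simp add: trace_def EE_def sum.delta)
  show ?thesis
    using left_m_fail_gen[of D "JZ (mat c)" "EE s s"] right_m_fail_gen[of D "JZ (mat c)" "EE s s"]
      DD trD ED DE trE J by simp
qed

lemma mat_mathieu:
  fixes c :: "'a::field"
  assumes ch: "CHAR('a) = 0 \<or> CHAR('a) > CARD('n)" and c0: "c \<noteq> 0"
  shows "left_mathieu (JZ (mat c :: 'a^'n^'n)) \<and> right_mathieu (JZ (mat c :: 'a^'n^'n))
       \<and> twosided_mathieu (JZ (mat c :: 'a^'n^'n))"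
proof -
  have J: "JZ (mat c :: 'a^'n^'n) = {A. trace A = 0}" by (rule JZ_mat[OF c0])
  have nil: "\<exists>K. \<forall>m\<ge>K. matpow a m = 0" if "\<forall>m\<ge>1. matpow (a::'a^'n^'n) m \<in> JZ (mat c)" for a
    using nilp[of a, OF _ ch] that J by simp
  have z: "0 \<in> JZ (mat c :: 'a^'n^'n)" using J by (simp add: trace_zero)
  show ?thesis
    unfolding left_mathieu_def right_mathieu_def twosided_mathieu_def
  proof (intro conjI msub_JZ allI impI)
    fix a b :: "'a^'n^'n" assume "\<forall>m\<ge>1. matpow a m \<in> JZ (mat c :: 'a^'n^'n)"
    then obtain K where K: "\<forall>m\<ge>K. matpow a m = 0" using nil by blast
    show "\<exists>N0. \<forall>m\<ge>N0. b ** matpow a m \<in> JZ (mat c)"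
    proof (intro exI[of _ K] allI impI)
      fix m assume "K \<le> m"
      then have "matpow a m = 0" using K by blast
      then show "b ** matpow a m \<in> JZ (mat c)" using z by simp
    qed
  next
    fix a b :: "'a^'n^'n" assume "\<forall>m\<ge>1. matpow a m \<in> JZ (mat c :: 'a^'n^'n)"
    then obtain K where K: "\<forall>m\<ge>K. matpow a m = 0" using nil by blast
    show "\<exists>N0. \<forall>m\<ge>N0. matpow a m ** b \<in> JZ (mat c)"
    proof (intro exI[of _ K] allI impI)
      fix m assume "K \<le> m"
      then have "matpow a m = 0" using K by blast
      then show "matpow a m ** b \<in> JZ (mat c)" using z by simp
    qed
  next
    fix a b b' :: "'a^'n^'n" assume "\<forall>m\<ge>1. matpow a m \<in> JZ (mat c :: 'a^'n^'n)"
    then obtain K where K: "\<forall>m\<ge>K. matpow a m = 0" using nil by blast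
    show "\<exists>N0. \<forall>m\<ge>N0. b ** matpow a m ** b' \<in> JZ (mat c)"
    proof (intro exI[of _ K] allI impI)
      fix m assume "K \<le> m"
      then have "matpow a m = 0" using K by blast
      then show "b ** matpow a m ** b' \<in> JZ (mat c)" using z by simp
    qed
  qed
qed

lemma ideal_univ: "theta_ideal th (UNIV :: ('a::field^'n^'n) set)"
  by (cases th) (simp_all add: left_ideal_def right_ideal_def twosided_ideal_def msub_UNIV)

lemma mathieu_univ: "theta_mathieu th (UNIV :: ('a::field^'n^'n) set)"
  by (cases th) (simp_all add: left_mathieu_def right_mathieu_def twosided_mathieu_def msub_UNIV)

lemma ideal_iff:
  fixes Z :: "'a::field^'n^'n"
  assumes n2: "CARD('n) \<ge> 2"
  shows "theta_ideal th (JZ Z) \<longleftrightarrow> Z = 0"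
proof
  assume "Z = 0" then show "theta_ideal th (JZ Z)" using ideal_univ by (simp add: JZ_0)
next
  assume h: "theta_ideal th (JZ Z)"
  show "Z = 0"
  proof (rule ccontr)
    assume "Z \<noteq> 0"
    from ideal_fail_nz[OF n2 this] have "\<not> left_ideal (JZ Z)" "\<not> right_ideal (JZ Z)" by auto
    then show False using h two_left_i by (cases th) auto
  qed
qed

lemma not_scalar:
  fixes Z :: "'a::field^'n^'n"
  assumes "\<not> (Z = 0 \<or> (\<exists>c. c \<noteq> 0 \<and> Z = mat c))"
  shows "\<forall>c. Z \<noteq> mat c"
proof (intro allI notI)
  fix c assume "Z = mat c"
  then show False using assms by (cases "c = 0") auto
qed

lemma m_iff1:
  fixes Z :: "'a::field^'n^'n"
  assumes ch: "CHAR('a) = 0 \<or> CHAR('a) > CARD('n)"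
  shows "theta_mathieu th (JZ Z) \<longleftrightarrow> (Z = 0 \<or> (\<exists>c. c \<noteq> 0 \<and> Z = mat c))"
proof
  assume "Z = 0 \<or> (\<exists>c. c \<noteq> 0 \<and> Z = mat c)"
  then show "theta_mathieu th (JZ Z)"
  proof
    assume "Z = 0" then show ?thesis using mathieu_univ by (simp add: JZ_0)
  next
    assume "\<exists>c. c \<noteq> 0 \<and> Z = mat c"
    then obtain c where c: "c \<noteq> 0" "Z = mat c" by blast
    have "left_mathieu (JZ (mat c :: 'a^'n^'n)) \<and> right_mathieu (JZ (mat c :: 'a^'n^'n))
       \<and> twosided_mathieu (JZ (mat c :: 'a^'n^'n))" by (rule mat_mathieu[OF ch c(1)])
    then show ?thesis using c(2) by (cases th) auto
  qed
next
  assume h: "theta_mathieu th (JZ Z)"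
  show "Z = 0 \<or> (\<exists>c. c \<noteq> 0 \<and> Z = mat c)"
  proof (rule ccontr)
    assume "\<not> (Z = 0 \<or> (\<exists>c. c \<noteq> 0 \<and> Z = mat c))"
    from nonscalar_fail[OF not_scalar[OF this]]
    have "\<not> left_mathieu (JZ Z)" "\<not> right_mathieu (JZ Z)" by auto
    then show False using h two_left_m by (cases th) auto
  qed
qed

lemma m_iff2:
  fixes Z :: "'a::field^'n^'n"
  assumes p0: "0 < CHAR('a)" and pn: "CHAR('a) \<le> CARD('n)"
  shows "theta_mathieu th (JZ Z) \<longleftrightarrow> Z = 0"
proof
  assume "Z = 0" then show "theta_mathieu th (JZ Z)" using mathieu_univ by (simp add: JZ_0)
next
  assume h: "theta_mathieu th (JZ Z)"
  show "Z = 0"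
  proof (rule ccontr)
    assume nz: "Z \<noteq> 0"
    have "\<not> left_mathieu (JZ Z) \<and> \<not> right_mathieu (JZ Z)"
    proof (cases "\<exists>c. c \<noteq> 0 \<and> Z = mat c")
      case True
      then obtain c where c: "c \<noteq> 0" "Z = mat c" by blast
      show ?thesis using charp_fail[OF p0 pn c(1)] c(2) by simp
    next
      case False
      then have "\<not> (Z = 0 \<or> (\<exists>c. c \<noteq> 0 \<and> Z = mat c))" using nz by simp
      from nonscalar_fail[OF not_scalar[OF this]] show ?thesis .
    qed
    then show False using h two_left_m by (cases th) auto
  qed
qed

theorem proposition5p4:
  fixes X :: "'a::field^'n^'n" and th :: theta
  assumes "CARD('n) \<ge> 2"
  shows "((CHAR('a) = 0 \<or> CHAR('a) > CARD('n)) \<longrightarrow>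
           sigma_theta th (HX X) = {Y. Y ** X = 0} \<and>
           tau_theta th (HX X) = {Y. Y ** X = 0 \<or> (\<exists>c. c \<noteq> 0 \<and> Y ** X = mat c)}) \<and>
         ((CHAR('a) > 0 \<and> CHAR('a) \<le> CARD('n)) \<longrightarrow>
           sigma_theta th (HX X) = {Y. Y ** X = 0} \<and>
           tau_theta th (HX X) = {Y. Y ** X = 0})"
proof -
  have sig: "sigma_theta th (HX X) = {Y. Y ** X = 0}"
    unfolding sigma_theta_def colon_eq
  proof (rule set_eqI)
    fix Y show "Y \<in> {u. theta_ideal th (JZ (u ** X))} \<longleftrightarrow> Y \<in> {Y. Y ** X = 0}"
      using ideal_iff[OF assms, of th "Y ** X"] by simp
  qed
  have t1: "tau_theta th (HX X) = {Y. Y ** X = 0 \<or> (\<exists>c. c \<noteq> 0 \<and> Y ** X = mat c)}"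
    if ch: "CHAR('a) = 0 \<or> CHAR('a) > CARD('n)"
    unfolding tau_theta_def colon_eq
  proof (rule set_eqI)
    fix Y show "Y \<in> {u. theta_mathieu th (JZ (u ** X))} \<longleftrightarrow> Y \<in> {Y. Y ** X = 0 \<or> (\<exists>c. c \<noteq> 0 \<and> Y ** X = mat c)}"
      using m_iff1[OF ch, of th "Y ** X"] by simp
  qed
  have t2: "tau_theta th (HX X) = {Y. Y ** X = 0}"
    if ch: "CHAR('a) > 0 \<and> CHAR('a) \<le> CARD('n)"
    unfolding tau_theta_def colon_eq
  proof (rule set_eqI)
    fix Y show "Y \<in> {u. theta_mathieu th (JZ (u ** X))} \<longleftrightarrow> Y \<in> {Y. Y ** X = 0}"
      using m_iff2[of th "Y ** X"] ch by simp
  qed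
  show ?thesis
  proof (intro conjI impI)
    assume h: "CHAR('a) = 0 \<or> CHAR('a) > CARD('n)"
    show "sigma_theta th (HX X) = {Y. Y ** X = 0}" by (rule sig)
    show "tau_theta th (HX X) = {Y. Y ** X = 0 \<or> (\<exists>c. c \<noteq> 0 \<and> Y ** X = mat c)}" by (rule t1[OF h])
  next
    assume h: "CHAR('a) > 0 \<and> CHAR('a) \<le> CARD('n)"
    show "sigma_theta th (HX X) = {Y. Y ** X = 0}" by (rule sig)
    show "tau_theta th (HX X) = {Y. Y ** X = 0}" by (rule t2[OF h])
  qed
qed

end
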